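(* Let $M\ge 0$, $\mathcal{M}=\{0,\dots,M\}$, $T\ge 1$, $c_u,c_l>0$, $0\le\beta\le 1$, and let $P$ be a stochastic matrix on $\mathcal{M}$ with rows $P_{i,\cdot}$. For a probability vector $b$ on $\mathcal{M}$ and $r\in\mathcal{M}$ let $$\bar C(b;r)=c_l\sum_{i=r}^{M} b(i)(i-r)+c_u\sum_{i=0}^{r-1} b(i)(r-i),$$ and when $\sum_{j\ge r}b(j)>0$ let $T_r[b]$ be the probability vector with $T_r[b](i)=0$ for $i<r$ and $T_r[b](i)=b(i)/\sum_{j=r}^M b(j)$ for $i\ge r$. Define $$V_T(b)=\min_{r}\bar C(b;r),\qquad V_t(b)=\min_{r\in\mathcal{M}}\Big\{\bar C(b;r)+\beta\Big[\Big(\sum_{i=r}^M b(i)\Big)V_{t+1}(T_r[b]P)+\sum_{i=0}^{r-1} b(i)V_{t+1}(P_{i,\cdot})\Big]\Big\},\ t<T,$$ (the first bracketed term being $0$ when $\sum_{i\ge r}b(i)=0$), and the full-observation value functions $$V^{FO}_T(b)=\bar C(b;\pi^{m}(b)),\qquad V^{FO}_t(b)=\bar C(b;\pi^{m}(b))+\beta\sum_{i=0}^M b(i)\,V^{FO}_{t+1}(P_{i,\cdot}),\ t<T,$$ where $\pi^m(b)=\min\{r\in\mathcal{M}:\sum_{i=0}^r b(i)\ge \frac{c_l}{c_l+c_u}\}$. Then for every $t\in\{1,\dots,T\}$ and every probability vector $b$, $V_t(b)\ge V^{FO}_t(b)$.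
   Context: $V_t$ is the optimal cost-to-go of the partially observed tracking problem (a Markov chain $B_t$ with transition matrix $P$; action $r>B_t$ costs $c_u(r-B_t)$ and reveals $B_t$, action $r\le B_t$ costs $c_l(B_t-r)$ and reveals only $B_t\ge r$), written in terms of the belief $b$; $V^{FO}$ is the cost-to-go of a genie that observes the state after every step. *)

theory Defs
  imports "HOL-Analysis.Analysis"
begin

text \<open>States are 0..M; vectors and matrices are functions on nat, only their values on 0..M matter.\<close>

definition prob_vec :: "nat \<Rightarrow> (nat \<Rightarrow> real) \<Rightarrow> bool" where
  "prob_vec M b \<longleftrightarrow> (\<forall>i\<le>M. b i \<ge> 0) \<and> (\<Sum>i=0..M. b i) = 1"

definition stochastic :: "nat \<Rightarrow> (nat \<Rightarrow> nat \<Rightarrow> real) \<Rightarrow> bool" where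
  "stochastic M P \<longleftrightarrow> (\<forall>i\<le>M. prob_vec M (P i))"

definition Cbar :: "nat \<Rightarrow> real \<Rightarrow> real \<Rightarrow> (nat \<Rightarrow> real) \<Rightarrow> nat \<Rightarrow> real" where
  "Cbar M cu cl b r = cl * (\<Sum>i=r..M. b i * (real i - real r))
                    + cu * (\<Sum>i=0..<r. b i * (real r - real i))"

definition Tr :: "nat \<Rightarrow> nat \<Rightarrow> (nat \<Rightarrow> real) \<Rightarrow> (nat \<Rightarrow> real)" where
  "Tr M r b = (\<lambda>i. if i < r then 0 else b i / (\<Sum>j=r..M. b j))"

definition vecmat :: "nat \<Rightarrow> (nat \<Rightarrow> real) \<Rightarrow> (nat \<Rightarrow> nat \<Rightarrow> real) \<Rightarrow> (nat \<Rightarrow> real)" where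
  "vecmat M b P = (\<lambda>j. \<Sum>i=0..M. b i * P i j)"

text \<open>Vpo M cu cl beta P n b is V_t(b) with n = T - t steps remaining.\<close>
fun Vpo :: "nat \<Rightarrow> real \<Rightarrow> real \<Rightarrow> real \<Rightarrow> (nat \<Rightarrow> nat \<Rightarrow> real) \<Rightarrow> nat \<Rightarrow> (nat \<Rightarrow> real) \<Rightarrow> real" where
  "Vpo M cu cl beta P 0 b = Min ((\<lambda>r. Cbar M cu cl b r) ` {0..M})"
| "Vpo M cu cl beta P (Suc n) b = Min ((\<lambda>r. Cbar M cu cl b r + beta *
      ((if (\<Sum>i=r..M. b i) > 0
        then (\<Sum>i=r..M. b i) * Vpo M cu cl beta P n (vecmat M (Tr M r b) P)
        else 0)
       + (\<Sum>i=0..<r. b i * Vpo M cu cl beta P n (P i)))) ` {0..M})"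

definition pim :: "nat \<Rightarrow> real \<Rightarrow> real \<Rightarrow> (nat \<Rightarrow> real) \<Rightarrow> nat" where
  "pim M cu cl b = (LEAST r. r \<le> M \<and> (\<Sum>i=0..r. b i) \<ge> cl / (cl + cu))"

fun Vfo :: "nat \<Rightarrow> real \<Rightarrow> real \<Rightarrow> real \<Rightarrow> (nat \<Rightarrow> nat \<Rightarrow> real) \<Rightarrow> nat \<Rightarrow> (nat \<Rightarrow> real) \<Rightarrow> real" where
  "Vfo M cu cl beta P 0 b = Cbar M cu cl b (pim M cu cl b)"
| "Vfo M cu cl beta P (Suc n) b = Cbar M cu cl b (pim M cu cl b)
      + beta * (\<Sum>i=0..M. b i * Vfo M cu cl beta P n (P i))"

end

theory Submission
  imports Defs
begin

lemma split_sum: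
  fixes f :: "nat \<Rightarrow> real"
  assumes "r \<le> Suc M"
  shows "(\<Sum>i=0..M. f i) = (\<Sum>i=0..<r. f i) + (\<Sum>i=r..M. f i)"
proof -
  have "{0..M} = {0..<r} \<union> {r..M}" using assms by auto
  then show ?thesis by (simp add: sum.union_disjoint ivl_disj_int)
qed

lemma Cbar_alt:
  assumes "prob_vec M b" "r \<le> M"
  shows "Cbar M cu cl b r = cl * ((\<Sum>i=0..M. b i * real i) - real r)
     + (cl + cu) * (\<Sum>i=0..<r. b i * (real r - real i))"
proof -
  have s1: "(\<Sum>i=0..M. b i) = 1" using assms unfolding prob_vec_def by auto
  have "(\<Sum>i=0..M. b i * (real i - real r)) =
      (\<Sum>i=0..<r. b i * (real i - real r)) + (\<Sum>i=r..M. b i * (real i - real r))"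
    using assms by (intro split_sum) auto
  moreover have "(\<Sum>i=0..M. b i * (real i - real r)) = (\<Sum>i=0..M. b i * real i) - real r * (\<Sum>i=0..M. b i)"
    by (simp add: algebra_simps sum_subtractf sum_distrib_left)
  then have "(\<Sum>i=0..M. b i * (real i - real r)) = (\<Sum>i=0..M. b i * real i) - real r"
    using s1 by simp
  moreover have "(\<Sum>i=0..<r. b i * (real i - real r)) = - (\<Sum>i=0..<r. b i * (real r - real i))"
    by (simp add: algebra_simps flip: sum_negf)
  ultimately have E: "(\<Sum>i=r..M. b i * (real i - real r)) = ((\<Sum>i=0..M. b i * real i) - real r) + (\<Sum>i=0..<r. b i * (real r - real i))"
    using s1 by linarith
  show ?thesis unfolding Cbar_def E by (simp add: algebra_simps)
qed

lemma Cbar_step: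
  assumes "prob_vec M b" "Suc r \<le> M"
  shows "Cbar M cu cl b (Suc r) = Cbar M cu cl b r - cl + (cl + cu) * (\<Sum>i=0..r. b i)"
proof -
  have H: "(\<Sum>i=0..<Suc r. b i * (real (Suc r) - real i)) = (\<Sum>i=0..<r. b i * (real r - real i)) + (\<Sum>i=0..r. b i)"
  proof -
    have "(\<Sum>i=0..<Suc r. b i * (real (Suc r) - real i)) = (\<Sum>i=0..<r. b i * (real (Suc r) - real i)) + b r"
      by simp
    also have "(\<Sum>i=0..<r. b i * (real (Suc r) - real i)) = (\<Sum>i=0..<r. b i * (real r - real i)) + (\<Sum>i=0..<r. b i)"
    proof -
      have "\<And>i. b i * (real (Suc r) - real i) = b i * (real r - real i) + b i"
        by (simp add: algebra_simps)
      then show ?thesis by (simp only: sum.distrib)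
    qed
    moreover have "sum b {0..r} = sum b {0..<r} + b r"
      by (simp add: atLeastLessThanSuc_atLeastAtMost[symmetric])
    ultimately show ?thesis by simp
  qed
  have A1: "Cbar M cu cl b (Suc r) = cl * ((\<Sum>i=0..M. b i * real i) - real r - 1)
     + (cl + cu) * ((\<Sum>i=0..<r. b i * (real r - real i)) + (\<Sum>i=0..r. b i))"
    using Cbar_alt[OF assms(1), of "Suc r" cu cl] assms H by (simp only:) simp
  have A0: "Cbar M cu cl b r = cl * ((\<Sum>i=0..M. b i * real i) - real r)
     + (cl + cu) * (\<Sum>i=0..<r. b i * (real r - real i))"
    using Cbar_alt[OF assms(1), of r cu cl] assms by simp
  have gen: "\<And>x1 x0 e rr k h f::real. x1 = cl * (e - rr - 1) + k * (h + f) \<Longrightarrow> x0 = cl * (e - rr) + k * h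
     \<Longrightarrow> x1 = x0 - cl + k * f"
    by (simp add: algebra_simps)
  show ?thesis by (rule gen[OF A1 A0])
qed

lemma pim_props:
  assumes "prob_vec M b" "cl > 0" "cu > 0"
  shows "pim M cu cl b \<le> M" "(\<Sum>i=0..pim M cu cl b. b i) \<ge> cl / (cl + cu)"
    "\<And>r. r < pim M cu cl b \<Longrightarrow> (\<Sum>i=0..r. b i) < cl / (cl + cu)"
proof -
  have ex: "M \<le> M \<and> (\<Sum>i=0..M. b i) \<ge> cl / (cl + cu)"
    using assms unfolding prob_vec_def by (simp add: divide_le_eq_1)
  have L: "pim M cu cl b \<le> M \<and> (\<Sum>i=0..pim M cu cl b. b i) \<ge> cl / (cl + cu)"
    unfolding pim_def by (rule LeastI[of _ M], rule ex)
  then show "pim M cu cl b \<le> M" "(\<Sum>i=0..pim M cu cl b. b i) \<ge> cl / (cl + cu)" by auto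
  fix r assume r: "r < pim M cu cl b"
  then have "\<not> (r \<le> M \<and> (\<Sum>i=0..r. b i) \<ge> cl / (cl + cu))"
    unfolding pim_def using not_less_Least by blast
  then show "(\<Sum>i=0..r. b i) < cl / (cl + cu)" using r L by auto
qed

lemma pim_opt:
  assumes "prob_vec M b" "cl > 0" "cu > 0" "r \<le> M"
  shows "Cbar M cu cl b (pim M cu cl b) \<le> Cbar M cu cl b r"
proof -
  let ?p = "pim M cu cl b"
  let ?C = "Cbar M cu cl b"
  note pp = pim_props[OF assms(1-3)]
  have pos: "cl + cu > 0" using assms by simp
  have nn: "\<forall>i\<le>M. b i \<ge> 0" using assms(1) unfolding prob_vec_def by auto
  show ?thesis
  proof (cases "?p \<le> r")
    case True
    show ?thesis using True
    proof (induction rule: dec_induct)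
      case base then show ?case by simp
    next
      case (step n)
      have nM: "Suc n \<le> M" using step assms by simp
      have "(\<Sum>i=0..?p. b i) \<le> (\<Sum>i=0..n. b i)"
        using step nn nM by (intro sum_mono2) auto
      with pp(2) have "cl / (cl + cu) \<le> (\<Sum>i=0..n. b i)" by simp
      then have "cl \<le> (cl + cu) * (\<Sum>i=0..n. b i)" using pos by (simp add: divide_le_eq mult.commute)
      then show ?case using Cbar_step[OF assms(1) nM, of cu cl] step by simp
    qed
  next
    case False
    then have "r \<le> ?p" by simp
    then show ?thesis
    proof (induction rule: inc_induct)
      case base then show ?case by simp
    next
      case (step n)
      have nM: "Suc n \<le> M" using step pp(1) by simp
      have "(\<Sum>i=0..n. b i) < cl / (cl + cu)" using pp(3) step by simp
      then have "(cl + cu) * (\<Sum>i=0..n. b i) < cl" using pos by (simp add: less_divide_eq mult.commute)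
      then show ?case using Cbar_step[OF assms(1) nM, of cu cl] step by simp
    qed
  qed
qed

lemma Cbar_lin:
  assumes "finite K"
  shows "Cbar M cu cl (\<lambda>j. \<Sum>k\<in>K. w k * q k j) r = (\<Sum>k\<in>K. w k * Cbar M cu cl (q k) r)"
proof -
  have 1: "(\<Sum>i=r..M. (\<Sum>k\<in>K. w k * q k i) * (real i - real r)) = (\<Sum>k\<in>K. w k * (\<Sum>i=r..M. q k i * (real i - real r)))"
    by (simp add: sum_distrib_left sum_distrib_right mult.assoc) (rule sum.swap)
  have 2: "(\<Sum>i=0..<r. (\<Sum>k\<in>K. w k * q k i) * (real r - real i)) = (\<Sum>k\<in>K. w k * (\<Sum>i=0..<r. q k i * (real r - real i)))"
    by (simp add: sum_distrib_left sum_distrib_right mult.assoc) (rule sum.swap)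
  show ?thesis unfolding Cbar_def 1 2
    by (simp add: sum_distrib_left sum.distrib algebra_simps)
qed

lemma comb_prob:
  assumes "finite K" "\<And>k. k \<in> K \<Longrightarrow> w k \<ge> 0" "(\<Sum>k\<in>K. w k) = 1"
    "\<And>k. k \<in> K \<Longrightarrow> prob_vec M (q k)"
  shows "prob_vec M (\<lambda>j. \<Sum>k\<in>K. w k * q k j)"
  unfolding prob_vec_def
proof
  show "\<forall>i\<le>M. 0 \<le> (\<Sum>k\<in>K. w k * q k i)"
    using assms unfolding prob_vec_def by (auto intro!: sum_nonneg)
  have "(\<Sum>i=0..M. \<Sum>k\<in>K. w k * q k i) = (\<Sum>k\<in>K. w k * (\<Sum>i=0..M. q k i))"
    by (simp add: sum_distrib_left) (rule sum.swap)
  also have "\<dots> = (\<Sum>k\<in>K. w k)"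
    using assms(4) unfolding prob_vec_def by (intro sum.cong) auto
  finally show "(\<Sum>i=0..M. \<Sum>k\<in>K. w k * q k i) = 1" using assms(3) by simp
qed

lemma Vfo_concave:
  assumes "finite K" "\<And>k. k \<in> K \<Longrightarrow> w k \<ge> 0" "(\<Sum>k\<in>K. w k) = 1"
    "\<And>k. k \<in> K \<Longrightarrow> prob_vec M (q k)" "cl > 0" "cu > 0"
  shows "(\<Sum>k\<in>K. w k * Vfo M cu cl beta P n (q k)) \<le> Vfo M cu cl beta P n (\<lambda>j. \<Sum>k\<in>K. w k * q k j)"
proof -
  define c where "c = (\<lambda>j. \<Sum>k\<in>K. w k * q k j)"
  have pc: "prob_vec M c" unfolding c_def by (rule comb_prob[OF assms(1-4)])
  have pM: "pim M cu cl c \<le> M" using pim_props(1)[OF pc assms(5,6)] .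
  have G: "(\<Sum>k\<in>K. w k * Cbar M cu cl (q k) (pim M cu cl (q k))) \<le> Cbar M cu cl c (pim M cu cl c)"
    unfolding c_def Cbar_lin[OF assms(1)]
    using pim_opt[OF assms(4) assms(5,6) pM[unfolded c_def]] assms(2)
    by (intro sum_mono mult_left_mono) auto
  show ?thesis
  proof (cases n)
    case 0
    then show ?thesis using G unfolding c_def by simp
  next
    case (Suc m)
    have L: "(\<Sum>i=0..M. c i * Vfo M cu cl beta P m (P i)) = (\<Sum>k\<in>K. w k * (\<Sum>i=0..M. q k i * Vfo M cu cl beta P m (P i)))"
      unfolding c_def by (simp add: sum_distrib_left sum_distrib_right mult.assoc) (rule sum.swap)
    have "(\<Sum>k\<in>K. w k * Vfo M cu cl beta P n (q k)) = (\<Sum>k\<in>K. w k * Cbar M cu cl (q k) (pim M cu cl (q k)))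
       + beta * (\<Sum>k\<in>K. w k * (\<Sum>i=0..M. q k i * Vfo M cu cl beta P m (P i)))"
      using Suc by (simp add: sum.distrib sum_distrib_left algebra_simps)
    also have "\<dots> \<le> Vfo M cu cl beta P n c"
      using Suc G L by simp
    finally show ?thesis unfolding c_def .
  qed
qed

lemma main_ineq:
  assumes "cu > 0" "cl > 0" "0 \<le> beta" "stochastic M P"
  shows "prob_vec M b \<Longrightarrow> Vfo M cu cl beta P n b \<le> Vpo M cu cl beta P n b"
proof (induction n arbitrary: b)
  case 0
  have "Cbar M cu cl b (pim M cu cl b) \<le> Min ((\<lambda>r. Cbar M cu cl b r) ` {0..M})"
    using pim_opt[OF 0 assms(2,1)] by (subst Min_ge_iff) auto
  then show ?case by simp
next
  case (Suc n)
  note pb = Suc.prems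
  have nn: "\<forall>i\<le>M. b i \<ge> 0" using pb unfolding prob_vec_def by auto
  have Pi: "\<And>i. i \<le> M \<Longrightarrow> prob_vec M (P i)" using assms(4) unfolding stochastic_def by auto
  let ?W = "\<lambda>i. Vfo M cu cl beta P n (P i)"
  have key: "Vfo M cu cl beta P (Suc n) b \<le> Cbar M cu cl b r + beta *
      ((if (\<Sum>i=r..M. b i) > 0
        then (\<Sum>i=r..M. b i) * Vpo M cu cl beta P n (vecmat M (Tr M r b) P)
        else 0)
       + (\<Sum>i=0..<r. b i * Vpo M cu cl beta P n (P i)))" if rM: "r \<le> M" for r
  proof -
    let ?S = "\<Sum>i=r..M. b i"
    have split: "(\<Sum>i=0..M. b i * ?W i) = (\<Sum>i=0..<r. b i * ?W i) + (\<Sum>i=r..M. b i * ?W i)"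
      using rM by (intro split_sum) auto
    have low: "(\<Sum>i=0..<r. b i * ?W i) \<le> (\<Sum>i=0..<r. b i * Vpo M cu cl beta P n (P i))"
      using rM nn Pi Suc.IH by (intro sum_mono mult_left_mono) auto
    have high: "(\<Sum>i=r..M. b i * ?W i) \<le> (if ?S > 0 then ?S * Vpo M cu cl beta P n (vecmat M (Tr M r b) P) else 0)"
    proof (cases "?S > 0")
      case True
      define w where "w = (\<lambda>k. b k / ?S)"
      have vm: "vecmat M (Tr M r b) P = (\<lambda>j. \<Sum>k\<in>{r..M}. w k * P k j)"
      proof
        fix j
        have "vecmat M (Tr M r b) P j = (\<Sum>i=0..<r. Tr M r b i * P i j) + (\<Sum>i=r..M. Tr M r b i * P i j)"
          unfolding vecmat_def using rM by (intro split_sum) auto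
        also have "\<dots> = (\<Sum>k\<in>{r..M}. w k * P k j)"
        proof -
          have "(\<Sum>i=0..<r. Tr M r b i * P i j) = 0" unfolding Tr_def by simp
          moreover have "(\<Sum>i=r..M. Tr M r b i * P i j) = (\<Sum>k\<in>{r..M}. w k * P k j)"
            unfolding Tr_def w_def by (intro sum.cong) auto
          ultimately show ?thesis by simp
        qed
        finally show "vecmat M (Tr M r b) P j = (\<Sum>k\<in>{r..M}. w k * P k j)" .
      qed
      have w0: "\<And>k. k \<in> {r..M} \<Longrightarrow> w k \<ge> 0" using nn True unfolding w_def by auto
      have w1: "(\<Sum>k\<in>{r..M}. w k) = 1" unfolding w_def using True
        by (simp add: sum_divide_distrib[symmetric])
      have qk: "\<And>k. k \<in> {r..M} \<Longrightarrow> prob_vec M (P k)" using Pi by auto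
      have pc: "prob_vec M (vecmat M (Tr M r b) P)"
        unfolding vm by (rule comb_prob[OF _ w0 w1 qk]) auto
      have conc: "(\<Sum>k\<in>{r..M}. w k * ?W k) \<le> Vfo M cu cl beta P n (vecmat M (Tr M r b) P)"
        unfolding vm by (rule Vfo_concave[OF _ w0 w1 qk assms(2,1)]) auto
      have "(\<Sum>i=r..M. b i * ?W i) = ?S * (\<Sum>k\<in>{r..M}. w k * ?W k)"
        unfolding w_def using True by (simp add: sum_distrib_left)
      also have "\<dots> \<le> ?S * Vpo M cu cl beta P n (vecmat M (Tr M r b) P)"
        using conc Suc.IH[OF pc] True by (intro mult_left_mono) auto
      finally show ?thesis using True by simp
    next
      case False
      have "?S \<ge> 0" using nn by (intro sum_nonneg) auto
      then have "?S = 0" using False by linarith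
      then have "\<forall>i\<in>{r..M}. b i = 0" using nn by (subst (asm) sum_nonneg_eq_0_iff) auto
      then show ?thesis using False by simp
    qed
    have "Vfo M cu cl beta P (Suc n) b = Cbar M cu cl b (pim M cu cl b) + beta * (\<Sum>i=0..M. b i * ?W i)"
      by simp
    also have "\<dots> \<le> Cbar M cu cl b r + beta * (\<Sum>i=0..M. b i * ?W i)"
      using pim_opt[OF pb assms(2,1) rM] by simp
    also have "\<dots> \<le> Cbar M cu cl b r + beta *
      ((if ?S > 0 then ?S * Vpo M cu cl beta P n (vecmat M (Tr M r b) P) else 0)
       + (\<Sum>i=0..<r. b i * Vpo M cu cl beta P n (P i)))"
      using split low high assms(3) by (intro add_left_mono mult_left_mono) auto
    finally show ?thesis .
  qed
  show ?case
    unfolding Vpo.simps by (subst Min_ge_iff) (use key in auto)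
qed

theorem lemma2:
  fixes M T t :: nat and cu cl beta :: real and P :: "nat \<Rightarrow> nat \<Rightarrow> real"
    and b :: "nat \<Rightarrow> real"
  assumes "T \<ge> 1" and "cu > 0" and "cl > 0" and "0 \<le> beta" and "beta \<le> 1"
    and "stochastic M P"
    and "1 \<le> t" and "t \<le> T"
    and "prob_vec M b"
  shows "Vpo M cu cl beta P (T - t) b \<ge> Vfo M cu cl beta P (T - t) b"
  using main_ineq[OF assms(2,3,4,6) assms(9)] by simp

end
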